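(* Let $f=\frac1n\sum_{i=1}^n f_i$, where each $f_i:\mathbb{R}^d\to\mathbb{R}$ is differentiable, bounded from below with infimum $f_i^{\mathrm{inf}}$, and $L_i$-smooth ($f_i(y)\le f_i(x)+\langle\nabla f_i(x),y-x\rangle+\frac{L_i}{2}\|y-x\|^2$ for all $x,y$); let $f^{\mathrm{inf}}=\inf f$. For each $i$ and $x$, let $g_i(x)$ be a random vector with $\mathbb{E}[g_i(x)]=\nabla f_i(x)$ satisfying, for some constants $A_i,B_i,C_i\ge0$ and all $x$, $$\mathbb{E}\|g_i(x)\|^2\le 2A_i(f_i(x)-f_i^{\mathrm{inf}})+B_i\|\nabla f_i(x)\|^2+C_i.$$ Let $\mathcal{Q}_1,\dots,\mathcal{Q}_n$ be mutually independent random operators, independent of $(g_1(x),\dots,g_n(x))$, with each $\mathcal{Q}_i$ an $\omega_i$-compression operator, and set $g(x)=\frac1n\sum_{i=1}^n\mathcal{Q}_i(g_i(x))$. Then there exist constants $A,B,C\ge 0$ such that for all $x$, $$\mathbb{E}\|g(x)\|^2\le 2A(f(x)-f^{\mathrm{inf}})+B\|\nabla f(x)\|^2+C.$$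
   Context: A random operator $\mathcal{Q}:\mathbb{R}^d\to\mathbb{R}^d$ is an $\omega$-compression operator ($\omega\ge0$) if for every $x\in\mathbb{R}^d$, $\mathbb{E}[\mathcal{Q}(x)]=x$ and $\mathbb{E}\|\mathcal{Q}(x)-x\|^2\le\omega\|x\|^2$. *)

theory Defs
  imports "HOL-Probability.Probability"
begin

text \<open>An omega-compression operator, given as a random operator
  Q :: 'w \<Rightarrow> 'a \<Rightarrow> 'a on the probability space M
  (Q s is the realised operator at sample point s):
  unbiased and with relative variance bounded by omega.\<close>
definition compression_operator ::
    "'w measure \<Rightarrow> ('w \<Rightarrow> 'a::euclidean_space \<Rightarrow> 'a) \<Rightarrow> real \<Rightarrow> bool" where
  "compression_operator M Q \<omega> \<longleftrightarrow>
     \<omega> \<ge> 0 \<and>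
     (\<forall>y. integrable M (\<lambda>s. Q s y) \<and> (\<integral>s. Q s y \<partial>M) = y \<and>
          (\<integral>\<^sup>+s. ennreal ((norm (Q s y - y))\<^sup>2) \<partial>M) \<le> ennreal (\<omega> * (norm y)\<^sup>2))"

end

theory Submission
  imports Defs
begin

lemma indep_bound:
  fixes X :: "'w \<Rightarrow> 's" and Y :: "'w \<Rightarrow> 'a::euclidean_space" and q :: "'s \<Rightarrow> 'a \<Rightarrow> 'a"
  assumes P: "prob_space M"
    and Xm: "X \<in> measurable M SS" and Ym: "Y \<in> borel_measurable M"
    and ind: "\<And>A B. A \<in> sets SS \<Longrightarrow> B \<in> sets borel \<Longrightarrow>
       measure M (X -` A \<inter> Y -` B \<inter> space M) = measure M (X -` A \<inter> space M) * measure M (Y -` B \<inter> space M)"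
    and qm: "(\<lambda>(s, y). q s y) \<in> borel_measurable (SS \<Otimes>\<^sub>M borel)"
    and bd: "\<And>y. (\<integral>\<^sup>+w. ennreal ((norm (q (X w) y))\<^sup>2) \<partial>M) \<le> c * ennreal ((norm y)\<^sup>2)"
  shows "(\<integral>\<^sup>+w. ennreal ((norm (q (X w) (Y w)))\<^sup>2) \<partial>M) \<le> c * (\<integral>\<^sup>+w. ennreal ((norm (Y w))\<^sup>2) \<partial>M)"
proof -
  interpret prob_space M by (rule P)
  interpret PX: prob_space "distr M SS X" by (rule prob_space_distr[OF Xm])
  interpret PY: prob_space "distr M borel Y" by (rule prob_space_distr[OF Ym])
  interpret PP: pair_sigma_finite "distr M SS X" "distr M borel Y"
    by (simp add: pair_sigma_finite_def PX.sigma_finite_measure_axioms PY.sigma_finite_measure_axioms)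
  have XYm: "(\<lambda>x. (X x, Y x)) \<in> measurable M (SS \<Otimes>\<^sub>M borel)"
    using Xm Ym by measurable
  have eq: "distr M SS X \<Otimes>\<^sub>M distr M borel Y = distr M (SS \<Otimes>\<^sub>M borel) (\<lambda>x. (X x, Y x))"
  proof (rule pair_measure_eqI)
    show "sigma_finite_measure (distr M SS X)" "sigma_finite_measure (distr M borel Y)"
      by (simp_all add: PX.sigma_finite_measure_axioms PY.sigma_finite_measure_axioms)
    show "sets (distr M SS X \<Otimes>\<^sub>M distr M borel Y) = sets (distr M (SS \<Otimes>\<^sub>M borel) (\<lambda>x. (X x, Y x)))"
      by (simp cong: sets_pair_measure_cong)
    fix A B assume A: "A \<in> sets (distr M SS X)" and B: "B \<in> sets (distr M borel Y)"
    then have A': "A \<in> sets SS" and B': "B \<in> sets borel" by auto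
    have "(\<lambda>x. (X x, Y x)) -` (A \<times> B) \<inter> space M = X -` A \<inter> Y -` B \<inter> space M" by auto
    moreover have "A \<times> B \<in> sets (SS \<Otimes>\<^sub>M borel)" using A' B' by auto
    ultimately have "emeasure (distr M (SS \<Otimes>\<^sub>M borel) (\<lambda>x. (X x, Y x))) (A \<times> B) = emeasure M (X -` A \<inter> Y -` B \<inter> space M)"
      by (simp add: emeasure_distr[OF XYm])
    also have "\<dots> = ennreal (measure M (X -` A \<inter> space M) * measure M (Y -` B \<inter> space M))"
      using ind[OF A' B'] by (simp add: emeasure_eq_measure)
    also have "\<dots> = emeasure (distr M SS X) A * emeasure (distr M borel Y) B"
      using A' B' Xm Ym by (simp add: emeasure_distr emeasure_eq_measure ennreal_mult)
    finally show "emeasure (distr M SS X) A * emeasure (distr M borel Y) B = emeasure (distr M (SS \<Otimes>\<^sub>M borel) (\<lambda>x. (X x, Y x))) (A \<times> B)" by simp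
  qed
  define h where "h = (\<lambda>p. ennreal ((norm (q (fst p) (snd p)))\<^sup>2))"
  have hm: "h \<in> borel_measurable (SS \<Otimes>\<^sub>M borel)"
  proof -
    have "(\<lambda>p. q (fst p) (snd p)) \<in> borel_measurable (SS \<Otimes>\<^sub>M borel)"
      using qm by (simp add: case_prod_beta')
    then show ?thesis unfolding h_def by measurable
  qed
  have "(\<integral>\<^sup>+w. ennreal ((norm (q (X w) (Y w)))\<^sup>2) \<partial>M) = (\<integral>\<^sup>+w. h (X w, Y w) \<partial>M)"
    by (simp add: h_def)
  also have "\<dots> = integral\<^sup>N (distr M (SS \<Otimes>\<^sub>M borel) (\<lambda>x. (X x, Y x))) h"
    using XYm hm by (simp add: nn_integral_distr)
  also have "\<dots> = integral\<^sup>N (distr M SS X \<Otimes>\<^sub>M distr M borel Y) h" by (simp add: eq)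
  also have "\<dots> = (\<integral>\<^sup>+ y. (\<integral>\<^sup>+ s. h (s, y) \<partial>distr M SS X) \<partial>distr M borel Y)"
    by (rule PP.nn_integral_snd[symmetric]) (simp add: hm cong: measurable_cong_sets)
  also have "\<dots> \<le> (\<integral>\<^sup>+ y. c * ennreal ((norm y)\<^sup>2) \<partial>distr M borel Y)"
  proof (rule nn_integral_mono)
    fix y
    have m1: "(\<lambda>s. h (s, y)) \<in> borel_measurable SS" using hm by measurable
    have "(\<integral>\<^sup>+ s. h (s, y) \<partial>distr M SS X) = (\<integral>\<^sup>+w. h (X w, y) \<partial>M)"
      using Xm m1 by (simp add: nn_integral_distr)
    also have "\<dots> \<le> c * ennreal ((norm y)\<^sup>2)" using bd[of y] by (simp add: h_def)
    finally show "(\<integral>\<^sup>+ s. h (s, y) \<partial>distr M SS X) \<le> c * ennreal ((norm y)\<^sup>2)" .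
  qed
  also have "\<dots> = (\<integral>\<^sup>+w. c * ennreal ((norm (Y w))\<^sup>2) \<partial>M)"
    by (rule nn_integral_distr[OF Ym]) measurable
  also have "\<dots> = c * (\<integral>\<^sup>+w. ennreal ((norm (Y w))\<^sup>2) \<partial>M)"
    by (rule nn_integral_cmult) (use Ym in measurable)
  finally show ?thesis .
qed
lemma grad_bound:
  fixes f :: "'a::real_inner \<Rightarrow> real"
  assumes bdd: "bdd_below (range f)"
    and smooth: "\<And>y. f y \<le> f x + g \<bullet> (y - x) + L / 2 * (norm (y - x))\<^sup>2"
  shows "(norm g)\<^sup>2 \<le> 2 * max L 1 * (f x - Inf (range f))"
proof -
  define L' where "L' = max L 1"
  have L'pos: "L' > 0" and LL: "L \<le> L'" unfolding L'_def by auto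
  define y where "y = x - (1 / L') *\<^sub>R g"
  have "Inf (range f) \<le> f y" using bdd by (simp add: cInf_lower)
  also have "\<dots> \<le> f x + g \<bullet> (y - x) + L / 2 * (norm (y - x))\<^sup>2" by (rule smooth)
  also have "g \<bullet> (y - x) = - (1 / L') * (norm g)\<^sup>2"
    by (simp add: y_def power2_norm_eq_inner)
  also have "(norm (y - x))\<^sup>2 = (1 / L')\<^sup>2 * (norm g)\<^sup>2"
    using L'pos by (simp add: y_def power_divide)
  finally have 1: "Inf (range f) \<le> f x - (1 / L') * (norm g)\<^sup>2 + L / 2 * ((1 / L')\<^sup>2 * (norm g)\<^sup>2)"
    by simp
  have "L / 2 * ((1 / L')\<^sup>2 * (norm g)\<^sup>2) \<le> L' / 2 * ((1 / L')\<^sup>2 * (norm g)\<^sup>2)"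
    using LL by (intro mult_right_mono) auto
  also have "\<dots> = (1 / (2 * L')) * (norm g)\<^sup>2" using L'pos by (simp add: power2_eq_square field_simps)
  finally have 2: "L / 2 * ((1 / L')\<^sup>2 * (norm g)\<^sup>2) \<le> (1 / (2 * L')) * (norm g)\<^sup>2" .
  have 3: "(1 / L') * (norm g)\<^sup>2 = 2 * ((1 / (2 * L')) * (norm g)\<^sup>2)" using L'pos by simp
  from 1 2 3 have "(1 / (2 * L')) * (norm g)\<^sup>2 \<le> f x - Inf (range f)" by linarith
  then have "(norm g)\<^sup>2 \<le> 2 * L' * (f x - Inf (range f))" using L'pos
    by (simp add: field_simps)
  then show ?thesis by (simp add: L'_def)
qed

lemma avg_sq:
  fixes v :: "nat \<Rightarrow> 'a::real_normed_vector"
  assumes "n \<ge> 1"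
  shows "(norm ((1 / real n) *\<^sub>R (\<Sum>i<n. v i)))\<^sup>2 \<le> (1 / real n) * (\<Sum>i<n. (norm (v i))\<^sup>2)"
proof -
  have "(norm (\<Sum>i<n. v i))\<^sup>2 \<le> (\<Sum>i<n. norm (v i))\<^sup>2"
    by (intro power_mono norm_sum) auto
  also have "\<dots> \<le> (\<Sum>i<n. (norm (v i))\<^sup>2) * real n"
    using sum_squared_le_sum_of_squares[of "\<lambda>i. norm (v i)" "{..<n}"] by simp
  finally have *: "(norm (\<Sum>i<n. v i))\<^sup>2 \<le> (\<Sum>i<n. (norm (v i))\<^sup>2) * real n" .
  have "(norm ((1 / real n) *\<^sub>R (\<Sum>i<n. v i)))\<^sup>2 = (1 / real n)\<^sup>2 * (norm (\<Sum>i<n. v i))\<^sup>2"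
    by (simp add: power_divide)
  also have "\<dots> \<le> (1 / real n)\<^sup>2 * ((\<Sum>i<n. (norm (v i))\<^sup>2) * real n)"
    by (intro mult_left_mono *) auto
  also have "\<dots> = (1 / real n) * (\<Sum>i<n. (norm (v i))\<^sup>2)"
    using assms by (simp add: power2_eq_square field_simps)
  finally show ?thesis .
qed

lemma cyl:
  assumes "i < n" "\<And>j. j < n \<Longrightarrow> Z j \<in> measurable M (T j)" "A \<in> sets (T i)"
  shows "\<exists>E\<in>sets (Pi\<^sub>M {..<n} T). (\<lambda>w. \<lambda>j\<in>{..<n}. Z j w) -` E \<inter> space M = Z i -` A \<inter> space M"
proof (intro bexI)
  show "(\<lambda>f. f i) -` A \<inter> space (Pi\<^sub>M {..<n} T) \<in> sets (Pi\<^sub>M {..<n} T)"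
    using assms by (intro measurable_sets[OF measurable_component_singleton]) auto
  show "(\<lambda>w. \<lambda>j\<in>{..<n}. Z j w) -` ((\<lambda>f. f i) -` A \<inter> space (Pi\<^sub>M {..<n} T)) \<inter> space M = Z i -` A \<inter> space M"
    using assms by (auto simp: space_PiM intro!: measurable_space[OF assms(2)])
qed

lemma compr_bound:
  assumes P: "prob_space M"
    and c: "compression_operator M Q \<omega>"
    and Qm: "\<And>y. (\<lambda>w. Q w y) \<in> borel_measurable M"
  shows "(\<integral>\<^sup>+w. ennreal ((norm (Q w y))\<^sup>2) \<partial>M) \<le> ennreal (2 * (1 + \<omega>)) * ennreal ((norm y)\<^sup>2)"
proof -
  interpret prob_space M by (rule P)
  have om: "\<omega> \<ge> 0" and v: "(\<integral>\<^sup>+s. ennreal ((norm (Q s y - y))\<^sup>2) \<partial>M) \<le> ennreal (\<omega> * (norm y)\<^sup>2)"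
    using c unfolding compression_operator_def by auto
  have pt: "(norm (Q w y))\<^sup>2 \<le> 2 * (norm (Q w y - y))\<^sup>2 + 2 * (norm y)\<^sup>2" for w
  proof -
    have "norm (Q w y) \<le> norm (Q w y - y) + norm y" using norm_triangle_ineq[of "Q w y - y" y] by simp
    then have "(norm (Q w y))\<^sup>2 \<le> (norm (Q w y - y) + norm y)\<^sup>2" by (intro power_mono) auto
    also have "\<dots> \<le> 2 * (norm (Q w y - y))\<^sup>2 + 2 * (norm y)\<^sup>2"
      using zero_le_power2[of "norm (Q w y - y) - norm y"] unfolding power2_eq_square by (simp add: algebra_simps)
    finally show ?thesis .
  qed
  have "(\<integral>\<^sup>+w. ennreal ((norm (Q w y))\<^sup>2) \<partial>M) \<le>
      (\<integral>\<^sup>+w. ennreal 2 * ennreal ((norm (Q w y - y))\<^sup>2) + ennreal (2 * (norm y)\<^sup>2) \<partial>M)"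
  proof (intro nn_integral_mono)
    fix w
    have "ennreal ((norm (Q w y))\<^sup>2) \<le> ennreal (2 * (norm (Q w y - y))\<^sup>2 + 2 * (norm y)\<^sup>2)"
      by (rule ennreal_leI[OF pt])
    also have "\<dots> = ennreal 2 * ennreal ((norm (Q w y - y))\<^sup>2) + ennreal (2 * (norm y)\<^sup>2)"
      by (subst ennreal_plus) (auto simp: ennreal_mult)
    finally show "ennreal ((norm (Q w y))\<^sup>2) \<le> ennreal 2 * ennreal ((norm (Q w y - y))\<^sup>2) + ennreal (2 * (norm y)\<^sup>2)" .
  qed
  also have "\<dots> = ennreal 2 * (\<integral>\<^sup>+w. ennreal ((norm (Q w y - y))\<^sup>2) \<partial>M) + ennreal (2 * (norm y)\<^sup>2)"
    using Qm[of y] by (simp add: nn_integral_add nn_integral_cmult emeasure_space_1)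
  also have "\<dots> \<le> ennreal 2 * ennreal (\<omega> * (norm y)\<^sup>2) + ennreal (2 * (norm y)\<^sup>2)"
    by (intro add_mono mult_left_mono v) auto
  also have "\<dots> = ennreal (2 * (1 + \<omega>)) * ennreal ((norm y)\<^sup>2)"
  proof -
    have a: "ennreal 2 * ennreal (\<omega> * (norm y)\<^sup>2) = ennreal (2 * \<omega> * (norm y)\<^sup>2)"
      using om by (subst ennreal_mult[symmetric]) (auto simp: mult.assoc)
    have b: "ennreal (2 * \<omega> * (norm y)\<^sup>2) + ennreal (2 * (norm y)\<^sup>2) = ennreal (2 * \<omega> * (norm y)\<^sup>2 + 2 * (norm y)\<^sup>2)"
      using om by (intro ennreal_plus[symmetric]) auto
    have c: "ennreal (2 * \<omega> * (norm y)\<^sup>2 + 2 * (norm y)\<^sup>2) = ennreal (2 * (1 + \<omega>)) * ennreal ((norm y)\<^sup>2)"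
      using om by (subst ennreal_mult[symmetric]) (auto simp: algebra_simps)
    show ?thesis using a b c by simp
  qed
  finally show ?thesis .
qed

theorem proposition4:
  fixes M :: "'w measure"
    and n :: nat
    and f :: "nat \<Rightarrow> 'a::euclidean_space \<Rightarrow> real"
    and gradf :: "nat \<Rightarrow> 'a \<Rightarrow> 'a"
    and gradF :: "'a \<Rightarrow> 'a"
    and L A B C \<omega> :: "nat \<Rightarrow> real"
    and G :: "nat \<Rightarrow> 'a \<Rightarrow> 'w \<Rightarrow> 'a"
    and S :: "nat \<Rightarrow> 's measure"
    and \<xi> :: "nat \<Rightarrow> 'w \<Rightarrow> 's"
    and q :: "nat \<Rightarrow> 's \<Rightarrow> 'a \<Rightarrow> 'a"
  defines "F \<equiv> (\<lambda>x. (1 / real n) * (\<Sum>i<n. f i x))"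
  assumes P: "prob_space M"
    and n_pos: "n \<ge> 1"
    (* each f_i is differentiable with gradient gradf i *)
    and grad_fi: "\<And>i x. i < n \<Longrightarrow> (f i has_derivative (\<lambda>h. gradf i x \<bullet> h)) (at x)"
    (* the gradient of f *)
    and grad_F: "\<And>x. (F has_derivative (\<lambda>h. gradF x \<bullet> h)) (at x)"
    (* bounded from below *)
    and bdd: "\<And>i. i < n \<Longrightarrow> bdd_below (range (f i))"
    (* L_i-smoothness *)
    and smooth: "\<And>i x y. i < n \<Longrightarrow>
        f i y \<le> f i x + gradf i x \<bullet> (y - x) + L i / 2 * (norm (y - x))\<^sup>2"
    (* stochastic gradients g_i(x) = G i x *)
    and G_meas: "\<And>i x. i < n \<Longrightarrow> G i x \<in> borel_measurable M"
    and G_unbiased: "\<And>i x. i < n \<Longrightarrow>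
        integrable M (G i x) \<and> (\<integral>w. G i x w \<partial>M) = gradf i x"
    and ABC_nonneg: "\<And>i. i < n \<Longrightarrow> A i \<ge> 0 \<and> B i \<ge> 0 \<and> C i \<ge> 0"
    and G_second: "\<And>i x. i < n \<Longrightarrow>
        (\<integral>\<^sup>+w. ennreal ((norm (G i x w))\<^sup>2) \<partial>M)
          \<le> ennreal (2 * A i * (f i x - Inf (range (f i))) + B i * (norm (gradf i x))\<^sup>2 + C i)"
    (* random operators Q_i(y) = q i (\<xi> i w) y, driven by random seeds \<xi> i *)
    and \<xi>_meas: "\<And>i. i < n \<Longrightarrow> \<xi> i \<in> measurable M (S i)"
    and q_meas: "\<And>i. i < n \<Longrightarrow> (\<lambda>(s, y). q i s y) \<in> borel_measurable (S i \<Otimes>\<^sub>M borel)"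
    and compr: "\<And>i. i < n \<Longrightarrow> compression_operator M (\<lambda>w. q i (\<xi> i w)) (\<omega> i)"
    (* Q_1..Q_n mutually independent *)
    and indep_Q: "prob_space.indep_vars M S \<xi> {..<n}"
    (* (Q_1..Q_n) independent of (g_1(x),...,g_n(x)) *)
    and indep_QG: "\<And>x. prob_space.indep_set M
        {(\<lambda>w. \<lambda>i\<in>{..<n}. \<xi> i w) -` E \<inter> space M | E. E \<in> sets (Pi\<^sub>M {..<n} S)}
        {(\<lambda>w. \<lambda>i\<in>{..<n}. G i x w) -` E \<inter> space M | E. E \<in> sets (Pi\<^sub>M {..<n} (\<lambda>_. borel))}"
  shows "\<exists>A' B' C' :: real. A' \<ge> 0 \<and> B' \<ge> 0 \<and> C' \<ge> 0 \<and>
     (\<forall>x. (\<integral>\<^sup>+w. ennreal ((norm ((1 / real n) *\<^sub>R (\<Sum>i<n. q i (\<xi> i w) (G i x w))))\<^sup>2) \<partial>M)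
        \<le> ennreal (2 * A' * (F x - Inf (range F)) + B' * (norm (gradF x))\<^sup>2 + C'))"
proof -
  interpret prob_space M by (rule P)
  define L' where "L' i = max (L i) 1" for i
  define c where "c i = 2 * (1 + \<omega> i) * (2 * A i + 2 * B i * L' i)" for i
  define K where "K = (\<Sum>i<n. c i)"
  define m where "m = (1 / real n) * (\<Sum>i<n. Inf (range (f i)))"
  define E where "E = (1 / real n) * (\<Sum>i<n. 2 * (1 + \<omega> i) * C i)"
  have om: "\<omega> i \<ge> 0" if "i < n" for i using compr[OF that] unfolding compression_operator_def by auto
  have L'pos: "L' i > 0" for i unfolding L'_def by auto
  have c_nn: "c i \<ge> 0" if "i < n" for i
    using om[OF that] ABC_nonneg[OF that] L'pos[of i] unfolding c_def by auto
  have K_nn: "K \<ge> 0" unfolding K_def using c_nn by (intro sum_nonneg) auto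
  have ci_le: "c i \<le> K" if "i < n" for i
    unfolding K_def using c_nn that by (intro member_le_sum) auto
  have E_nn: "E \<ge> 0" unfolding E_def using om ABC_nonneg by (intro mult_nonneg_nonneg sum_nonneg) auto
  have Fm: "m \<le> F x" for x
  proof -
    have "(\<Sum>i<n. Inf (range (f i))) \<le> (\<Sum>i<n. f i x)"
      using bdd by (intro sum_mono) (simp add: cInf_lower)
    then show ?thesis unfolding m_def F_def by (intro mult_left_mono) auto
  qed
  have mInf: "m \<le> Inf (range F)" using Fm by (intro cInf_greatest) auto
  have Qm: "(\<lambda>w. q i (\<xi> i w) (Y w)) \<in> borel_measurable M" if "i < n" "Y \<in> borel_measurable M" for i Y
  proof -
    have "(\<lambda>w. (\<xi> i w, Y w)) \<in> measurable M (S i \<Otimes>\<^sub>M borel)"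
      using \<xi>_meas[OF that(1)] that(2) by measurable
    from measurable_compose[OF this q_meas[OF that(1)]] show ?thesis by simp
  qed
  have indep2: "measure M (\<xi> i -` A' \<inter> G i x -` B' \<inter> space M) =
      measure M (\<xi> i -` A' \<inter> space M) * measure M (G i x -` B' \<inter> space M)"
    if i: "i < n" and A': "A' \<in> sets (S i)" and B': "B' \<in> sets borel" for i x A' B'
  proof -
    obtain EA where EA: "EA \<in> sets (Pi\<^sub>M {..<n} S)"
      "(\<lambda>w. \<lambda>j\<in>{..<n}. \<xi> j w) -` EA \<inter> space M = \<xi> i -` A' \<inter> space M"
      using cyl[of i n \<xi> M S A'] i A' \<xi>_meas by blast
    obtain EB where EB: "EB \<in> sets (Pi\<^sub>M {..<n} (\<lambda>_. borel))"
      "(\<lambda>w. \<lambda>j\<in>{..<n}. G j x w) -` EB \<inter> space M = G i x -` B' \<inter> space M"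
      using cyl[of i n "\<lambda>j. G j x" M "\<lambda>_. borel" B'] i B' G_meas by blast
    have "measure M ((\<xi> i -` A' \<inter> space M) \<inter> (G i x -` B' \<inter> space M)) =
        measure M (\<xi> i -` A' \<inter> space M) * measure M (G i x -` B' \<inter> space M)"
    proof (rule indep_setD[OF indep_QG[of x]])
      show "\<xi> i -` A' \<inter> space M \<in> {(\<lambda>w. \<lambda>i\<in>{..<n}. \<xi> i w) -` E \<inter> space M | E. E \<in> sets (Pi\<^sub>M {..<n} S)}"
        unfolding EA(2)[symmetric] using EA(1) by blast
      show "G i x -` B' \<inter> space M \<in> {(\<lambda>w. \<lambda>i\<in>{..<n}. G i x w) -` E \<inter> space M | E. E \<in> sets (Pi\<^sub>M {..<n} (\<lambda>_. borel))}"
        unfolding EB(2)[symmetric] using EB(1) by blast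
    qed
    moreover have "(\<xi> i -` A' \<inter> space M) \<inter> (G i x -` B' \<inter> space M) = \<xi> i -` A' \<inter> G i x -` B' \<inter> space M"
      by auto
    ultimately show ?thesis by simp
  qed
  show ?thesis
  proof (rule exI[of _ "K / 2"], rule exI[of _ "0::real"], rule exI[of _ "K * (Inf (range F) - m) + E"], intro conjI allI)
    show "K / 2 \<ge> 0" using K_nn by simp
    show "(0::real) \<le> 0" by simp
    show "K * (Inf (range F) - m) + E \<ge> 0" using K_nn mInf E_nn by simp
    fix x
    define d where "d i = f i x - Inf (range (f i))" for i
    have d_nn: "d i \<ge> 0" if "i < n" for i using bdd[OF that] unfolding d_def by (simp add: cInf_lower)
    define b where "b i = 2 * A i * d i + B i * (norm (gradf i x))\<^sup>2 + C i" for i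
    have b_nn: "b i \<ge> 0" if "i < n" for i
      using ABC_nonneg[OF that] d_nn[OF that] unfolding b_def by auto
    have term_bd: "2 * (1 + \<omega> i) * b i \<le> K * d i + 2 * (1 + \<omega> i) * C i" if i: "i < n" for i
    proof -
      have gb: "(norm (gradf i x))\<^sup>2 \<le> 2 * L' i * d i"
        unfolding L'_def d_def by (rule grad_bound[OF bdd[OF i] smooth[OF i]])
      have "B i * (norm (gradf i x))\<^sup>2 \<le> B i * (2 * L' i * d i)"
        using ABC_nonneg[OF i] gb by (intro mult_left_mono) auto
      then have "b i \<le> (2 * A i + 2 * B i * L' i) * d i + C i" unfolding b_def by (simp add: algebra_simps)
      then have "2 * (1 + \<omega> i) * b i \<le> 2 * (1 + \<omega> i) * ((2 * A i + 2 * B i * L' i) * d i + C i)"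
        using om[OF i] by (intro mult_left_mono) auto
      also have "\<dots> = c i * d i + 2 * (1 + \<omega> i) * C i" unfolding c_def by (simp add: algebra_simps)
      also have "\<dots> \<le> K * d i + 2 * (1 + \<omega> i) * C i"
        using ci_le[OF i] d_nn[OF i] by (intro add_right_mono mult_right_mono) auto
      finally show ?thesis .
    qed
    have each: "(\<integral>\<^sup>+w. ennreal ((norm (q i (\<xi> i w) (G i x w)))\<^sup>2) \<partial>M) \<le> ennreal (2 * (1 + \<omega> i) * b i)"
      if i: "i < n" for i
    proof -
      have "(\<integral>\<^sup>+w. ennreal ((norm (q i (\<xi> i w) (G i x w)))\<^sup>2) \<partial>M)
          \<le> ennreal (2 * (1 + \<omega> i)) * (\<integral>\<^sup>+w. ennreal ((norm (G i x w))\<^sup>2) \<partial>M)"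
      proof (rule indep_bound[OF P \<xi>_meas[OF i] G_meas[OF i] _ q_meas[OF i]])
        show "\<And>A' B'. A' \<in> sets (S i) \<Longrightarrow> B' \<in> sets borel \<Longrightarrow> measure M (\<xi> i -` A' \<inter> G i x -` B' \<inter> space M) =
            measure M (\<xi> i -` A' \<inter> space M) * measure M (G i x -` B' \<inter> space M)"
          using indep2[OF i] by blast
        show "\<And>y. (\<integral>\<^sup>+w. ennreal ((norm (q i (\<xi> i w) y))\<^sup>2) \<partial>M) \<le> ennreal (2 * (1 + \<omega> i)) * ennreal ((norm y)\<^sup>2)"
          using compr_bound[OF P compr[OF i]] Qm[OF i] by simp
      qed
      also have "\<dots> \<le> ennreal (2 * (1 + \<omega> i)) * ennreal (b i)"
        using G_second[OF i, of x] unfolding b_def d_def by (intro mult_left_mono) auto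
      also have "\<dots> = ennreal (2 * (1 + \<omega> i) * b i)"
        using om[OF i] b_nn[OF i] by (simp add: ennreal_mult)
      finally show ?thesis .
    qed
    have real_ineq: "(1 / real n) * (\<Sum>i<n. 2 * (1 + \<omega> i) * b i)
        \<le> 2 * (K / 2) * (F x - Inf (range F)) + 0 * (norm (gradF x))\<^sup>2 + (K * (Inf (range F) - m) + E)"
    proof -
      have "(\<Sum>i<n. 2 * (1 + \<omega> i) * b i) \<le> (\<Sum>i<n. K * d i + 2 * (1 + \<omega> i) * C i)"
        using term_bd by (intro sum_mono) auto
      also have "\<dots> = K * (\<Sum>i<n. d i) + (\<Sum>i<n. 2 * (1 + \<omega> i) * C i)"
        by (simp add: sum.distrib sum_distrib_left)
      also have "(\<Sum>i<n. d i) = (\<Sum>i<n. f i x) - (\<Sum>i<n. Inf (range (f i)))"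
        unfolding d_def by (rule sum_subtractf)
      also have "K * ((\<Sum>i<n. f i x) - (\<Sum>i<n. Inf (range (f i)))) = K * (\<Sum>i<n. f i x) - K * (\<Sum>i<n. Inf (range (f i)))"
        by (rule right_diff_distrib)
      finally have "(1 / real n) * (\<Sum>i<n. 2 * (1 + \<omega> i) * b i) \<le>
          (1 / real n) * (K * (\<Sum>i<n. f i x) - K * (\<Sum>i<n. Inf (range (f i))) + (\<Sum>i<n. 2 * (1 + \<omega> i) * C i))"
        by (intro mult_left_mono) auto
      also have "\<dots> = K * F x - K * m + E"
        unfolding F_def m_def E_def by (simp add: algebra_simps)
      finally show ?thesis by (simp add: algebra_simps)
    qed
    have mQ: "(\<lambda>w. q i (\<xi> i w) (G i x w)) \<in> borel_measurable M" if "i < n" for i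
      using Qm[OF that G_meas[OF that]] .
    have "(\<integral>\<^sup>+w. ennreal ((norm ((1 / real n) *\<^sub>R (\<Sum>i<n. q i (\<xi> i w) (G i x w))))\<^sup>2) \<partial>M)
        \<le> (\<integral>\<^sup>+w. ennreal (1 / real n) * (\<Sum>i<n. ennreal ((norm (q i (\<xi> i w) (G i x w)))\<^sup>2)) \<partial>M)"
    proof (rule nn_integral_mono)
      fix w
      have "ennreal ((norm ((1 / real n) *\<^sub>R (\<Sum>i<n. q i (\<xi> i w) (G i x w))))\<^sup>2)
          \<le> ennreal ((1 / real n) * (\<Sum>i<n. (norm (q i (\<xi> i w) (G i x w)))\<^sup>2))"
        by (rule ennreal_leI[OF avg_sq[OF n_pos]])
      also have "\<dots> = ennreal (1 / real n) * ennreal (\<Sum>i<n. (norm (q i (\<xi> i w) (G i x w)))\<^sup>2)"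
        by (rule ennreal_mult) (auto intro: sum_nonneg)
      also have "\<dots> = ennreal (1 / real n) * (\<Sum>i<n. ennreal ((norm (q i (\<xi> i w) (G i x w)))\<^sup>2))"
        by (subst sum_ennreal) auto
      finally show "ennreal ((norm ((1 / real n) *\<^sub>R (\<Sum>i<n. q i (\<xi> i w) (G i x w))))\<^sup>2)
          \<le> ennreal (1 / real n) * (\<Sum>i<n. ennreal ((norm (q i (\<xi> i w) (G i x w)))\<^sup>2))" .
    qed
    also have "\<dots> = ennreal (1 / real n) * (\<Sum>i<n. (\<integral>\<^sup>+w. ennreal ((norm (q i (\<xi> i w) (G i x w)))\<^sup>2) \<partial>M))"
    proof -
      have mQ2: "(\<lambda>w. ennreal ((norm (q i (\<xi> i w) (G i x w)))\<^sup>2)) \<in> borel_measurable M" if "i \<in> {..<n}" for i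
        using mQ[of i] that by simp
      have ms: "(\<lambda>w. \<Sum>i<n. ennreal ((norm (q i (\<xi> i w) (G i x w)))\<^sup>2)) \<in> borel_measurable M"
        by (rule borel_measurable_sum[OF mQ2])
      show ?thesis
        by (simp only: nn_integral_cmult[OF ms] nn_integral_sum[OF mQ2])
    qed
    also have "\<dots> \<le> ennreal (1 / real n) * (\<Sum>i<n. ennreal (2 * (1 + \<omega> i) * b i))"
      using each by (intro mult_left_mono sum_mono) auto
    also have "\<dots> = ennreal ((1 / real n) * (\<Sum>i<n. 2 * (1 + \<omega> i) * b i))"
    proof -
      have tnn: "0 \<le> 2 * (1 + \<omega> i) * b i" if "i \<in> {..<n}" for i
        using om[of i] b_nn[of i] that by simp
      have "(\<Sum>i<n. ennreal (2 * (1 + \<omega> i) * b i)) = ennreal (\<Sum>i<n. 2 * (1 + \<omega> i) * b i)"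
        by (rule sum_ennreal[OF tnn])
      moreover have "ennreal (1 / real n) * ennreal (\<Sum>i<n. 2 * (1 + \<omega> i) * b i) = ennreal ((1 / real n) * (\<Sum>i<n. 2 * (1 + \<omega> i) * b i))"
        by (rule ennreal_mult[symmetric]) (simp, rule sum_nonneg, rule tnn, simp)
      ultimately show ?thesis by simp
    qed
    also have "\<dots> \<le> ennreal (2 * (K / 2) * (F x - Inf (range F)) + 0 * (norm (gradF x))\<^sup>2 + (K * (Inf (range F) - m) + E))"
      by (rule ennreal_leI[OF real_ineq])
    finally show "(\<integral>\<^sup>+w. ennreal ((norm ((1 / real n) *\<^sub>R (\<Sum>i<n. q i (\<xi> i w) (G i x w))))\<^sup>2) \<partial>M)
        \<le> ennreal (2 * (K / 2) * (F x - Inf (range F)) + 0 * (norm (gradF x))\<^sup>2 + (K * (Inf (range F) - m) + E))" .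
  qed
qed

end
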